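(* For $n\ge2$, with $\widetilde Q_n$, $\Sigma^2$, $\iota$, $f_n$, $f_{n+1}$ and $\epsilon_n$ as in the context, $$\iota_*\circ\Sigma^2\,[f_n\circ\epsilon_n]\;=\;[f_{n+1}\circ\epsilon_{n+1}]\quad\text{in }\pi_{2n+1}(\widetilde Q_{n+1}),$$ where $\epsilon_{n+1}:=\Sigma^2\epsilon_n$.
   Context: $\widetilde Q_n=\{(a,b)\in\mathbb R^{2n}\oplus\mathbb R^{2n}: |a|=|b|=1,\ \langle a,b\rangle=0\}$. For $S\subset V$, $\Sigma^2S=\{(\sqrt{1-|X|^2}\,v,X): v\in S, X\in\mathbb R^2,|X|\le1\}\subset V\oplus\mathbb R^2$, and for $f\colon P\to S$ with $P\subset U$, $\Sigma^2f(\sqrt{1-|X|^2}u,X)=(\sqrt{1-|X|^2}f(u),X)$. $j_+$ is the orientation-compatible orthogonal complex structure on $\mathbb R^2$, and $\iota\colon\Sigma^2\widetilde Q_n\to\widetilde Q_{n+1}$ is $(\sqrt{1-|X|^2}(a,b),X)\mapsto\big((\sqrt{1-|X|^2}a,X),(\sqrt{1-|X|^2}b,-j_+X)\big)$. Fix a unit vector $a\in\mathbb R^{2n}$; $f_n\colon S(a^\perp)\cong S^{2n-2}\to\widetilde Q_n$, $b\mapsto(a,b)$, is the inclusion of a fibre of $(a,b)\mapsto a$, and $f_{n+1}\colon S((a,0)^\perp)\to\widetilde Q_{n+1}$, $c\mapsto((a,0),c)$, where $S((a,0)^\perp)=S(a^\perp\oplus\mathbb R^2)=\Sigma^2S(a^\perp)$.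 $\epsilon_n$ is a generator of $\pi_{2n-1}(S(a^\perp))\cong\pi_{2n-1}(S^{2n-2})$ ($\cong\mathbb Z$ for $n=2$, $\mathbb Z/2$ for $n>2$), and $\epsilon_{n+1}=\Sigma^2\epsilon_n\in\pi_{2n+1}(S((a,0)^\perp))$. *)

theory Defs
  imports "HOL-Analysis.Analysis"
begin

text \<open>R^{2n} is modelled by a euclidean space 'a with DIM('a) = 2n; R^2 by complex,
  so V \<oplus> R^2 is 'v \<times> complex and j_+ is multiplication by the imaginary unit.\<close>

definition Qt :: "('v::real_inner \<times> 'v) set" where
  "Qt = {(a, b). norm a = 1 \<and> norm b = 1 \<and> inner a b = 0}"

definition perp_sphere :: "'v::real_inner \<Rightarrow> 'v set" where
  "perp_sphere a = {b. norm b = 1 \<and> inner a b = 0}"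

definition susp2_set :: "'u::real_normed_vector set \<Rightarrow> ('u \<times> complex) set" where
  "susp2_set S = {(sqrt (1 - (norm X)^2) *\<^sub>R v, X) | v X. v \<in> S \<and> norm X \<le> 1}"

text \<open>Sigma^2 f (sqrt(1-|X|^2) u, X) = (sqrt(1-|X|^2) f u, X) for u on the unit sphere.\<close>
definition susp2 :: "('u::real_normed_vector \<Rightarrow> 'v::real_normed_vector) \<Rightarrow> ('u \<times> complex \<Rightarrow> 'v \<times> complex)" where
  "susp2 f = (\<lambda>(w, X). if norm X < 1
      then (sqrt (1 - (norm X)^2) *\<^sub>R f ((1 / sqrt (1 - (norm X)^2)) *\<^sub>R w), X)
      else (0, X))"

definition iota :: "(('v::real_normed_vector \<times> 'v) \<times> complex) \<Rightarrow> (('v \<times> complex) \<times> ('v \<times> complex))" where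
  "iota = (\<lambda>((p, q), X). ((p, X), (q, - (\<i> * X))))"

definition fibre_incl :: "'v \<Rightarrow> 'v \<Rightarrow> 'v \<times> 'v" where
  "fibre_incl a = (\<lambda>b. (a, b))"

end

theory Submission
  imports Defs
begin

lemma hom_intro:
  assumes "continuous_on ({0..1::real} \<times> S) H" "H ` ({0..1::real} \<times> S) \<subseteq> T"
    "\<And>x. x \<in> S \<Longrightarrow> H (0, x) = f x" "\<And>x. x \<in> S \<Longrightarrow> H (1, x) = g x"
  shows "homotopic_with_canon (\<lambda>_. True) S T f g"
proof (subst homotopic_with)
  show "\<exists>h. continuous_map (prod_topology (top_of_set {0..1::real}) (top_of_set S)) (top_of_set T) h \<and>
         (\<forall>x\<in>topspace (top_of_set S). h (0, x) = f x) \<and>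
         (\<forall>x\<in>topspace (top_of_set S). h (1, x) = g x) \<and> (\<forall>t\<in>{0..1}. True)"
    apply (rule exI[of _ H])
    using assms by (auto simp: image_subset_iff continuous_map_in_subtopology)
qed auto

lemma cone_cont:
  fixes e :: "'a::euclidean_space \<Rightarrow> 'a"
  assumes "continuous_on (sphere 0 1) e" "e ` sphere 0 1 \<subseteq> sphere 0 1"
  shows "continuous_on UNIV (\<lambda>w. norm w *\<^sub>R e (w /\<^sub>R norm w))"
proof (rule continuous_at_imp_continuous_on, clarify)
  fix w :: 'a
  show "isCont (\<lambda>w. norm w *\<^sub>R e (w /\<^sub>R norm w)) w"
  proof (cases "w = 0")
    case True
    have b: "norm (norm x *\<^sub>R e (x /\<^sub>R norm x)) \<le> norm x" for x :: 'a
    proof (cases "x = 0")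
      case False
      then have "x /\<^sub>R norm x \<in> sphere 0 1" by (simp add: norm_sgn[unfolded sgn_div_norm])
      then have "e (x /\<^sub>R norm x) \<in> sphere 0 1" using assms(2) by blast
      then have "norm (e (x /\<^sub>R norm x)) = 1" by simp
      then show ?thesis by simp
    qed simp
    have "((\<lambda>x. norm x *\<^sub>R e (x /\<^sub>R norm x)) \<longlongrightarrow> 0) (at 0)"
      by (rule tendsto_0_le[where f="\<lambda>x. x" and K=1]) (use b in \<open>auto intro!: always_eventually tendsto_ident_at\<close>)
    then show ?thesis using True by (simp add: isCont_def)
  next
    case False
    have "continuous_on (-{0}) (\<lambda>x::'a. x /\<^sub>R norm x)" by (intro continuous_intros) auto
    moreover have "(\<lambda>x::'a. x /\<^sub>R norm x) ` (-{0}) \<subseteq> sphere 0 1" proof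
      fix y assume "y \<in> (\<lambda>x::'a. x /\<^sub>R norm x) ` (-{0})"
      then obtain x where "x \<noteq> 0" "y = x /\<^sub>R norm x" by auto
      then show "y \<in> sphere 0 1" by (simp add: norm_sgn[unfolded sgn_div_norm])
    qed
    ultimately have "continuous_on (-{0}) (e \<circ> (\<lambda>x. x /\<^sub>R norm x))"
      using continuous_on_compose continuous_on_subset assms(1) by metis
    then have "continuous (at w) (e \<circ> (\<lambda>x. x /\<^sub>R norm x))"
      using False by (simp add: continuous_on_eq_continuous_at open_Compl o_def)
    then show ?thesis by (intro continuous_intros) (auto simp: o_def)
  qed
qed

lemma complex_inner_iX: "inner (X::complex) (\<i> * X) = 0"
  by (simp add: inner_complex_def algebra_simps)

theorem lemmaA2:
  fixes n :: nat and a :: "'a::euclidean_space" and eps :: "'a \<Rightarrow> 'a"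
  assumes "n \<ge> 2" and "DIM('a) = 2 * n" and "norm a = 1"
    and "continuous_on (sphere 0 1) eps" and "eps ` sphere 0 1 \<subseteq> perp_sphere a"
    and "\<forall>g :: 'a \<Rightarrow> 'a. continuous_on (sphere 0 1) g \<and> g ` sphere 0 1 \<subseteq> perp_sphere a \<longrightarrow>
          (\<exists>d :: 'a \<Rightarrow> 'a. continuous_on (sphere 0 1) d \<and> d ` sphere 0 1 \<subseteq> sphere 0 1 \<and>
             homotopic_with_canon (\<lambda>_. True) (sphere 0 1) (perp_sphere a) g (eps \<circ> d))"
  shows "homotopic_with_canon (\<lambda>_. True) (sphere (0 :: 'a \<times> complex) 1) Qt
           (iota \<circ> susp2 (fibre_incl a \<circ> eps))
           (\<lambda>x. ((a, 0), susp2 eps x))"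
proof -
  define g where "g = (\<lambda>w::'a. norm w *\<^sub>R eps (w /\<^sub>R norm w))"
  let ?S = "sphere (0 :: 'a \<times> complex) 1"
  have epsS: "eps ` sphere 0 1 \<subseteq> sphere 0 1" using assms(5) by (auto simp: perp_sphere_def)
  have contg: "continuous_on UNIV g" unfolding g_def by (rule cone_cont[OF assms(4) epsS])
  have gprop: "norm (g w) = norm w \<and> inner a (g w) = 0" for w
  proof (cases "w = 0")
    case False
    then have "w /\<^sub>R norm w \<in> sphere 0 1" by (simp add: norm_sgn[unfolded sgn_div_norm])
    then have "eps (w /\<^sub>R norm w) \<in> perp_sphere a" using assms(5) by blast
    then show ?thesis by (simp add: g_def perp_sphere_def)
  qed (simp add: g_def)
  have sph: "norm w ^ 2 + norm X ^ 2 = 1" if "(w, X) \<in> ?S" for w X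
  proof -
    have "sqrt (norm w ^ 2 + norm X ^ 2) = 1" using that by (simp add: norm_Pair)
    then show ?thesis by simp
  qed
  have sq: "sqrt (1 - (norm X)^2) = norm w" if "(w, X) \<in> ?S" for w X
    using sph[OF that] by (metis add_diff_cancel_right' norm_ge_zero real_sqrt_abs abs_of_nonneg power2_eq_square real_sqrt_mult_self)
  have A: "susp2 eps (w, X) = (g w, X)" if "(w, X) \<in> ?S" for w X
  proof (cases "norm X < 1")
    case True
    then show ?thesis using sq[OF that] by (simp add: susp2_def g_def divide_inverse_commute)
  next
    case False
    then have "1 \<le> norm X ^ 2" by (simp add: one_le_power)
    then have "norm w ^ 2 \<le> 0" using sph[OF that] by linarith
    then have "norm w = 0" by simp
    then show ?thesis using False by (simp add: susp2_def g_def)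
  qed
  have B: "(iota \<circ> susp2 (fibre_incl a \<circ> eps)) (w, X) = ((norm w *\<^sub>R a, X), (g w, - (\<i> * X)))"
    if "(w, X) \<in> ?S" for w X
  proof (cases "norm X < 1")
    case True
    then show ?thesis using sq[OF that] by (simp add: susp2_def g_def iota_def fibre_incl_def divide_inverse_commute)
  next
    case False
    then have "1 \<le> norm X ^ 2" by (simp add: one_le_power)
    then have "norm w ^ 2 \<le> 0" using sph[OF that] by linarith
    then have "norm w = 0" by simp
    then show ?thesis using False by (simp add: susp2_def g_def iota_def zero_prod_def)
  qed
  have a0: "a \<noteq> 0" using assms(3) by auto
  define M where "M = (\<lambda>x::'a \<times> complex. ((a, 0::complex), (g (fst x), - (\<i> * snd x))))"
  have contgS: "continuous_on T f \<Longrightarrow> continuous_on T (\<lambda>x. g (f x))" for T :: "(real \<times> 'a \<times> complex) set" and f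
    by (rule continuous_on_compose2[OF contg _ subset_UNIV])
  define v where "v = (\<lambda>p::real \<times> ('a \<times> complex). (((1 - fst p) * norm (fst (snd p)) + fst p) *\<^sub>R a, (1 - fst p) *\<^sub>R snd (snd p)))"
  have vnz: "v (t, x) \<noteq> 0" if "t \<in> {0..1}" "x \<in> ?S" for t x
  proof
    assume "v (t, x) = 0"
    then have e1: "((1 - t) * norm (fst x) + t) *\<^sub>R a = 0" and e2: "(1 - t) *\<^sub>R snd x = 0"
      by (auto simp: v_def zero_prod_def)
    from e1 a0 have c0: "(1 - t) * norm (fst x) + t = 0" by simp
    have "t = 0" using c0 that(1) by (smt (verit) mult_nonneg_nonneg norm_ge_zero atLeastAtMost_iff)
    then have "norm (fst x) = 0" "snd x = 0" using c0 e2 by auto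
    then show False using that(2) by (cases x) (auto simp: norm_Pair)
  qed
  define H1 where "H1 = (\<lambda>p::real \<times> ('a \<times> complex). (sgn (v p), (g (fst (snd p)), - (\<i> * snd (snd p)))))"
  have h1: "homotopic_with_canon (\<lambda>_. True) ?S Qt (iota \<circ> susp2 (fibre_incl a \<circ> eps)) M"
  proof (rule hom_intro[of _ H1])
    have cv: "continuous_on ({0..1} \<times> ?S) v" unfolding v_def by (intro continuous_intros)
    have "continuous_on ({0..1} \<times> ?S) (\<lambda>p. sgn (v p))"
      by (rule continuous_on_sgn[OF cv]) (use vnz in auto)
    then show "continuous_on ({0..1} \<times> ?S) H1" unfolding H1_def
      by (rule continuous_on_Pair) (intro continuous_intros contgS)
    show "H1 ` ({0..1} \<times> ?S) \<subseteq> Qt"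
    proof
      fix q assume "q \<in> H1 ` ({0..1} \<times> ?S)"
      then obtain t w X where tx: "t \<in> {0..1}" "(w, X) \<in> ?S" and q: "q = H1 (t, (w, X))" by auto
      have vn: "v (t, (w, X)) \<noteq> 0" using vnz[OF tx] .
      have n1: "norm (sgn (v (t, (w, X)))) = 1" using vn by (simp add: norm_sgn)
      have n2: "norm (g w, - (\<i> * X)) = 1" using gprop[of w] sph[OF tx(2)] by (simp add: norm_Pair norm_mult)
      have i0: "inner (v (t, (w, X))) (g w, - (\<i> * X)) = 0"
        using gprop[of w] complex_inner_iX[of X] by (simp add: v_def)
      have "inner (sgn (v (t, (w, X)))) (g w, - (\<i> * X)) = 0" using i0 by (simp add: sgn_div_norm)
      then show "q \<in> Qt" using n1 n2 by (simp add: Qt_def H1_def q)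
    qed
    show "H1 (0, x) = (iota \<circ> susp2 (fibre_incl a \<circ> eps)) x" if "x \<in> ?S" for x
    proof (cases x)
      case (Pair w X)
      have "norm (norm w *\<^sub>R a, X) = 1" using sph[of w X] that Pair assms(3) by (simp add: norm_Pair)
      then have "sgn (norm w *\<^sub>R a, X) = (norm w *\<^sub>R a, X)" by (simp add: sgn_div_norm)
      then show ?thesis using B[of w X] that Pair by (simp add: H1_def v_def)
    qed
    show "H1 (1, x) = M x" if "x \<in> ?S" for x
    proof -
      have "norm (a, 0::complex) = 1" using assms(3) by (simp add: norm_Pair)
      then have "sgn (a, 0::complex) = (a, 0)" by (simp add: sgn_div_norm)
      then show ?thesis by (simp add: H1_def v_def M_def)
    qed
  qed
  define c where "c = (\<lambda>t::real. sgn (complex_of_real (1 - t) * (- \<i>) + complex_of_real t))"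
  have cnz: "complex_of_real (1 - t) * (- \<i>) + complex_of_real t \<noteq> 0" for t
    by (simp add: complex_eq_iff)
  define H2 where "H2 = (\<lambda>p::real \<times> ('a \<times> complex). ((a, 0::complex), (g (fst (snd p)), c (fst p) * snd (snd p))))"
  have h2: "homotopic_with_canon (\<lambda>_. True) ?S Qt M (\<lambda>x. ((a, 0), susp2 eps x))"
  proof (rule hom_intro[of _ H2])
    have cc: "continuous_on UNIV c" unfolding c_def
      by (rule continuous_on_sgn) (intro continuous_intros, use cnz in blast)
    have "continuous_on ({0..1} \<times> ?S) (\<lambda>p. c (fst p))"
      by (rule continuous_on_compose2[OF cc]) (auto intro!: continuous_intros)
    then show "continuous_on ({0..1} \<times> ?S) H2" unfolding H2_def
      by (intro continuous_intros contgS)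
    show "H2 ` ({0..1} \<times> ?S) \<subseteq> Qt"
    proof
      fix q assume "q \<in> H2 ` ({0..1} \<times> ?S)"
      then obtain t w X where tx: "t \<in> {0..1}" "(w, X) \<in> ?S" and q: "q = H2 (t, (w, X))" by auto
      have cn: "norm (c t) = 1" using cnz[of t] by (simp add: c_def norm_sgn)
      have n1: "norm (a, 0::complex) = 1" using assms(3) by (simp add: norm_Pair)
      have n2: "norm (g w, c t * X) = 1" using gprop[of w] sph[OF tx(2)] cn by (simp add: norm_Pair norm_mult)
      show "q \<in> Qt" using n1 n2 gprop[of w] by (simp add: Qt_def H2_def q)
    qed
    have c0: "c 0 = - \<i>" by (simp add: c_def sgn_div_norm)
    have c1: "c 1 = 1" by (simp add: c_def)
    show "H2 (0, x) = M x" if "x \<in> ?S" for x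
      using c0 by (simp add: H2_def M_def)
    show "H2 (1, x) = ((a, 0), susp2 eps x)" if "x \<in> ?S" for x
      using c1 A[of "fst x" "snd x"] that by (simp add: H2_def)
  qed
  show ?thesis using homotopic_with_trans[OF h1 h2] .
qed
end
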